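(* Let $G$ be a connected weighted undirected graph on $N$ vertices with positive edge weights and combinatorial Laplacian $L$. Let $P \in \mathbb{R}^{n\times N}$ be a coarsening matrix with respect to $G$, and let $P^+$ be its Moore–Penrose pseudoinverse. Then $L_c = (P^+)^\top L P^+$ is the combinatorial Laplacian of some weighted graph (with nonnegative weights) if and only if all nonzero entries of $P^+$ are equal.
   Context: The combinatorial Laplacian of a weighted graph with weights $w_{ij}\ge 0$ is $L(i,i) = \deg_i = \sum_j w_{ij}$, $L(i,j) = -w_{ij}$ for $i\ne j$. A matrix $P\in\mathbb{R}^{n\times N}$ is a coarsening matrix w.r.t. $G$ if: (a) every column of $P$ has exactly one nonzero entry and every row is nonzero (i.e., each vertex of $G$ is assigned to exactly one row); (b) for every row $r$, the subgraph of $G$ induced by the vertices $\{v_i : P(r,i)\ne 0\}$ is connected. *)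

theory Defs
  imports "HOL-Analysis.Analysis"
begin

text \<open>A weighted undirected graph on the vertex type 'v (finite) is given by its weight
  function: nonnegative, symmetric, no self-loops. Edges are the pairs with positive weight.\<close>
definition weighted_graph :: "('v::finite \<Rightarrow> 'v \<Rightarrow> real) \<Rightarrow> bool" where
  "weighted_graph w \<longleftrightarrow> (\<forall>i j. w i j \<ge> 0) \<and> (\<forall>i j. w i j = w j i) \<and> (\<forall>i. w i i = 0)"

definition laplacian :: "('v::finite \<Rightarrow> 'v \<Rightarrow> real) \<Rightarrow> real^'v^'v" where
  "laplacian w = (\<chi> i j. if i = j then (\<Sum>k\<in>UNIV. w i k) else - w i j)"

definition is_comb_laplacian :: "real^'v^'v \<Rightarrow> bool" where
  "is_comb_laplacian M \<longleftrightarrow> (\<exists>w. weighted_graph w \<and> M = laplacian (w :: 'v::finite \<Rightarrow> 'v \<Rightarrow> real))"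

definition induced_connected :: "('v \<Rightarrow> 'v \<Rightarrow> real) \<Rightarrow> 'v set \<Rightarrow> bool" where
  "induced_connected w S \<longleftrightarrow>
     (\<forall>i\<in>S. \<forall>j\<in>S. (\<lambda>a b. a \<in> S \<and> b \<in> S \<and> w a b > 0)\<^sup>*\<^sup>* i j)"

definition connected_graph :: "('v \<Rightarrow> 'v \<Rightarrow> real) \<Rightarrow> bool" where
  "connected_graph w \<longleftrightarrow> induced_connected w UNIV"

definition coarsening_matrix :: "('v \<Rightarrow> 'v \<Rightarrow> real) \<Rightarrow> real^'v^'r \<Rightarrow> bool" where
  "coarsening_matrix w P \<longleftrightarrow>
     (\<forall>i. \<exists>!r. P $ r $ i \<noteq> 0) \<and>
     (\<forall>r. \<exists>i. P $ r $ i \<noteq> 0) \<and>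
     (\<forall>r. induced_connected w {i. P $ r $ i \<noteq> 0})"

text \<open>Moore--Penrose pseudoinverse, via the four Penrose conditions (unique solution).\<close>
definition penrose_conds :: "real^'n^'m \<Rightarrow> real^'m^'n \<Rightarrow> bool" where
  "penrose_conds A X \<longleftrightarrow>
     A ** X ** A = A \<and> X ** A ** X = X \<and>
     transpose (A ** X) = A ** X \<and> transpose (X ** A) = X ** A"

definition pinv :: "real^'n^'m \<Rightarrow> real^'m^'n" where
  "pinv A = (THE X. penrose_conds A X)"

end

theory Submission imports Defs begin

lemma penrose_unique:
  fixes A :: "real^'n::finite^'m::finite"
  assumes "penrose_conds A X" "penrose_conds A Y"
  shows "X = Y"
proof -
  have a: "A ** X ** A = A" "X ** A ** X = X" "transpose (A ** X) = A ** X" "transpose (X ** A) = X ** A"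
    using assms(1) unfolding penrose_conds_def by auto
  have b: "A ** Y ** A = A" "Y ** A ** Y = Y" "transpose (A ** Y) = A ** Y" "transpose (Y ** A) = Y ** A"
    using assms(2) unfolding penrose_conds_def by auto
  have tA1: "transpose A = transpose A ** (A ** Y)"
    by (metis b(1) b(3) matrix_transpose_mul)
  have tA2: "transpose A = (X ** A) ** transpose A"
    by (metis a(1) a(4) matrix_transpose_mul matrix_mul_assoc)
  have "X = X ** (A ** X)" using a(2) by (simp add: matrix_mul_assoc)
  also have "\<dots> = X ** (transpose X ** transpose A)" by (metis a(3) matrix_transpose_mul)
  also have "\<dots> = X ** (transpose X ** (transpose A ** (A ** Y)))" using tA1 by simp
  also have "\<dots> = X ** ((transpose (A ** X)) ** (A ** Y))" by (simp add: matrix_transpose_mul matrix_mul_assoc)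
  also have "\<dots> = X ** A ** Y" using a(2) a(3) by (simp add: matrix_mul_assoc)
  finally have x: "X = X ** A ** Y" .
  have "Y = (Y ** A) ** Y" using b(2) by simp
  also have "\<dots> = (transpose A ** transpose Y) ** Y" by (metis b(4) matrix_transpose_mul)
  also have "\<dots> = (((X ** A) ** transpose A) ** transpose Y) ** Y" using tA2 by simp
  also have "\<dots> = ((X ** A) ** (transpose (Y ** A))) ** Y" by (simp add: matrix_transpose_mul matrix_mul_assoc)
  also have "\<dots> = X ** A ** Y" using b(2) b(4) by (metis matrix_mul_assoc)
  finally show ?thesis using x by simp
qed

lemma lap_mul:
  assumes "w i i = 0"
  shows "(\<Sum>j\<in>UNIV. laplacian w $ i $ j * x j) = (\<Sum>j\<in>UNIV. w i j * (x i - x j))"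
proof -
  have "(\<Sum>j\<in>UNIV. laplacian w $ i $ j * x j) = (\<Sum>k\<in>UNIV. w i k) * x i + (\<Sum>j\<in>UNIV-{i}. - w i j * x j)"
    by (simp add: sum.remove[of UNIV i] laplacian_def)
  also have "(\<Sum>j\<in>UNIV-{i}. - w i j * x j) = (\<Sum>j\<in>UNIV. - w i j * x j)"
    by (simp add: sum.remove[of UNIV i] assms)
  also have "(\<Sum>k\<in>UNIV. w i k) * x i + (\<Sum>j\<in>UNIV. - w i j * x j) = (\<Sum>j\<in>UNIV. w i j * x i) - (\<Sum>j\<in>UNIV. w i j * x j)"
    by (simp add: sum_distrib_right sum_negf)
  also have "\<dots> = (\<Sum>j\<in>UNIV. w i j * (x i - x j))"
    by (simp add: sum_subtractf right_diff_distrib)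
  finally show ?thesis .
qed

lemma quad:
  fixes w :: "'v::finite \<Rightarrow> 'v \<Rightarrow> real"
  assumes "\<And>i j. w i j = w j i"
  shows "(\<Sum>i\<in>UNIV. x i * (\<Sum>j\<in>UNIV. w i j * (x i - x j))) = (\<Sum>i\<in>UNIV. \<Sum>j\<in>UNIV. w i j * (x i - x j)^2) / 2"
proof -
  let ?S = "(\<Sum>i\<in>UNIV. \<Sum>j\<in>UNIV. w i j * x i * (x i - x j))"
  have 1: "(\<Sum>i\<in>UNIV. x i * (\<Sum>j\<in>UNIV. w i j * (x i - x j))) = ?S"
    by (simp add: sum_distrib_left algebra_simps)
  have 2: "?S = (\<Sum>i\<in>UNIV. \<Sum>j\<in>UNIV. w i j * x j * (x j - x i))"
    by (subst sum.swap) (simp add: assms)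
  have "2 * ?S = (\<Sum>i\<in>UNIV. \<Sum>j\<in>UNIV. w i j * x i * (x i - x j) + w i j * x j * (x j - x i))"
    using 2 by (simp add: sum.distrib)
  also have "\<dots> = (\<Sum>i\<in>UNIV. \<Sum>j\<in>UNIV. w i j * (x i - x j)^2)"
    by (simp add: power2_eq_square algebra_simps)
  finally show ?thesis using 1 by simp
qed

lemma entry:
  fixes Q :: "real^'r::finite^'v::finite"
  shows "(transpose Q ** L ** Q) $ r $ s = (\<Sum>i\<in>UNIV. Q $ i $ r * (\<Sum>j\<in>UNIV. L $ i $ j * Q $ j $ s))"
  by (simp add: matrix_matrix_mult_def transpose_def sum_distrib_left sum_distrib_right
      mult.assoc) (subst sum.swap, simp)


theorem proposition2:
  fixes w :: "'v::finite \<Rightarrow> 'v \<Rightarrow> real" and P :: "real^'v^'r::finite"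
  assumes "weighted_graph w"
    and "connected_graph w"
    and "coarsening_matrix w P"
  shows "is_comb_laplacian (transpose (pinv P) ** laplacian w ** pinv P) \<longleftrightarrow>
         (\<forall>i r i' r'. pinv P $ i $ r \<noteq> 0 \<longrightarrow> pinv P $ i' $ r' \<noteq> 0 \<longrightarrow>
                      pinv P $ i $ r = pinv P $ i' $ r')"
proof -
  have c1: "\<forall>i. \<exists>!r. P $ r $ i \<noteq> 0" and c2: "\<forall>r. \<exists>i. P $ r $ i \<noteq> 0"
    using assms(3) unfolding coarsening_matrix_def by auto
  have w0: "\<And>i j. w i j \<ge> 0" and wsym: "\<And>i j. w i j = w j i" and wd: "\<And>i. w i i = 0"
    using assms(1) unfolding weighted_graph_def by auto
  define \<rho> where "\<rho> i = (THE r. P $ r $ i \<noteq> 0)" for i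
  have rho: "P $ r $ i \<noteq> 0 \<longleftrightarrow> r = \<rho> i" for r i
  proof -
    have "P $ \<rho> i $ i \<noteq> 0" unfolding \<rho>_def using c1 by (metis (mono_tags, lifting) theI)
    then show ?thesis using c1 by metis
  qed
  define d where "d r = (\<Sum>i\<in>UNIV. (P $ r $ i)^2)" for r
  have dpos: "d r > 0" for r
  proof -
    obtain i where i: "P $ r $ i \<noteq> 0" using c2 by blast
    have "(P $ r $ i)^2 \<le> d r" unfolding d_def by (rule member_le_sum) auto
    moreover have "(P $ r $ i)^2 > 0" using i by simp
    ultimately show ?thesis by linarith
  qed
  define Q where "Q = (\<chi> i r. P $ r $ i / d r)"
  have Qe: "Q $ i $ r = P $ r $ i / d r" for i r unfolding Q_def by simp
  have qnz: "Q $ i $ r \<noteq> 0 \<longleftrightarrow> r = \<rho> i" for i r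
    using dpos[of r] rho[of r i] by (simp add: Qe)
  have PQ: "P ** Q = mat 1"
  proof (intro vec_eq_iff[THEN iffD2] allI)
    fix r s
    show "(P ** Q) $ r $ s = mat 1 $ r $ s"
    proof (cases "r = s")
      case True
      have "(P ** Q) $ r $ s = (\<Sum>i\<in>UNIV. (P $ r $ i)^2) / d r"
        using True by (simp add: matrix_matrix_mult_def Qe power2_eq_square sum_divide_distrib)
      also have "\<dots> = 1" using dpos[of r] by (simp add: d_def)
      finally show ?thesis using True by (simp add: mat_def)
    next
      case False
      have "(P ** Q) $ r $ s = (\<Sum>i\<in>UNIV. P $ r $ i * (P $ s $ i / d s))"
        by (simp add: matrix_matrix_mult_def Qe)
      also have "\<dots> = 0"
        by (rule sum.neutral) (metis False mult_eq_0_iff div_0 rho)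
      finally show ?thesis using False by (simp add: mat_def)
    qed
  qed
  have QPs: "transpose (Q ** P) = Q ** P"
    by (simp add: vec_eq_iff transpose_def matrix_matrix_mult_def Qe mult.commute)
  have pc: "penrose_conds P Q"
    unfolding penrose_conds_def using PQ QPs
    by (simp add: matrix_mul_assoc transpose_mat) (metis matrix_mul_assoc matrix_mul_rid)
  have pinvQ: "pinv P = Q"
    unfolding pinv_def using pc penrose_unique by blast
  define x where "x i = (\<Sum>r\<in>UNIV. Q $ i $ r)" for i
  have xe: "x i = Q $ i $ (\<rho> i)" for i
  proof -
    have "x i = (\<Sum>r\<in>UNIV. if r = \<rho> i then Q $ i $ (\<rho> i) else 0)"
      unfolding x_def by (rule sum.cong) (simp, metis qnz)
    then show ?thesis by simp
  qed
  have xnz: "x i \<noteq> 0" for i using xe qnz by simp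
  define L where "L = laplacian w"
  define M where "M = transpose Q ** L ** Q"
  have Lsym: "L $ i $ j = L $ j $ i" for i j by (simp add: L_def laplacian_def wsym)
  have Lm: "(\<Sum>j\<in>UNIV. L $ i $ j * z j) = (\<Sum>j\<in>UNIV. w i j * (z i - z j))" for i z
    unfolding L_def by (rule lap_mul) (rule wd)
  have Me: "M $ r $ s = (\<Sum>i\<in>UNIV. \<Sum>j\<in>UNIV. Q $ i $ r * L $ i $ j * Q $ j $ s)" for r s
    unfolding M_def by (simp add: entry sum_distrib_left mult.assoc)
  have rows: "(\<Sum>s\<in>UNIV. M $ r $ s) = (\<Sum>i\<in>UNIV. Q $ i $ r * (\<Sum>j\<in>UNIV. L $ i $ j * x j))" for r
  proof -
    have "(\<Sum>s\<in>UNIV. M $ r $ s) = (\<Sum>s\<in>UNIV. \<Sum>i\<in>UNIV. \<Sum>j\<in>UNIV. Q $ i $ r * L $ i $ j * Q $ j $ s)"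
      by (simp add: Me)
    also have "\<dots> = (\<Sum>i\<in>UNIV. \<Sum>j\<in>UNIV. \<Sum>s\<in>UNIV. Q $ i $ r * L $ i $ j * Q $ j $ s)"
      by (rule trans[OF sum.swap], rule sum.cong, rule refl, rule sum.swap)
    also have "\<dots> = (\<Sum>i\<in>UNIV. Q $ i $ r * (\<Sum>j\<in>UNIV. L $ i $ j * x j))"
      by (simp add: sum_distrib_left mult.assoc x_def)
    finally show ?thesis .
  qed
  have "is_comb_laplacian M \<longleftrightarrow>
         (\<forall>i r i' r'. Q $ i $ r \<noteq> 0 \<longrightarrow> Q $ i' $ r' \<noteq> 0 \<longrightarrow> Q $ i $ r = Q $ i' $ r')"
  proof
    assume "is_comb_laplacian M"
    then obtain W where W: "weighted_graph W" "M = laplacian W"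
      unfolding is_comb_laplacian_def by blast
    have rz: "(\<Sum>s\<in>UNIV. M $ r $ s) = 0" for r
    proof -
      have "W r r = 0" using W(1) unfolding weighted_graph_def by auto
      then have "(\<Sum>j\<in>UNIV. laplacian W $ r $ j * (\<lambda>_. 1) j) = (\<Sum>j\<in>UNIV. W r j * (1 - 1))"
        by (rule lap_mul)
      then show ?thesis using W(2) by simp
    qed
    define y where "y i = (\<Sum>j\<in>UNIV. L $ i $ j * x j)" for i
    have "0 = (\<Sum>r\<in>UNIV. \<Sum>i\<in>UNIV. Q $ i $ r * y i)"
      using rz rows by (simp add: y_def)
    also have "\<dots> = (\<Sum>i\<in>UNIV. x i * y i)"
      by (subst sum.swap) (simp add: x_def sum_distrib_right)
    also have "\<dots> = (\<Sum>i\<in>UNIV. x i * (\<Sum>j\<in>UNIV. w i j * (x i - x j)))"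
      by (simp add: y_def Lm)
    also have "\<dots> = (\<Sum>i\<in>UNIV. \<Sum>j\<in>UNIV. w i j * (x i - x j)^2) / 2"
      by (rule quad) (rule wsym)
    finally have z: "(\<Sum>i\<in>UNIV. \<Sum>j\<in>UNIV. w i j * (x i - x j)^2) = 0" by simp
    have nn: "\<And>i j. w i j * (x i - x j)^2 \<ge> 0" using w0 by simp
    have "\<forall>i\<in>UNIV. (\<Sum>j\<in>UNIV. w i j * (x i - x j)^2) = 0"
      using z by (subst sum_nonneg_eq_0_iff[symmetric]) (auto intro: sum_nonneg nn)
    then have "\<forall>i j. w i j * (x i - x j)^2 = 0"
      by (simp add: sum_nonneg_eq_0_iff nn)
    then have edge: "w i j > 0 \<Longrightarrow> x i = x j" for i j by (metis less_irrefl mult_eq_0_iff power_eq_0_iff right_minus_eq)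
    have xc: "x i = x j" for i j
    proof -
      have "(\<lambda>a b. a \<in> UNIV \<and> b \<in> UNIV \<and> w a b > 0)\<^sup>*\<^sup>* i j"
        using assms(2) unfolding connected_graph_def induced_connected_def by blast
      then show ?thesis
        by (induction rule: rtranclp_induct) (auto dest: edge)
    qed
    show "\<forall>i r i' r'. Q $ i $ r \<noteq> 0 \<longrightarrow> Q $ i' $ r' \<noteq> 0 \<longrightarrow> Q $ i $ r = Q $ i' $ r'"
    proof (intro allI impI)
      fix i r i' r'
      assume "Q $ i $ r \<noteq> 0" "Q $ i' $ r' \<noteq> 0"
      then have "r = \<rho> i" "r' = \<rho> i'" using qnz by auto
      then show "Q $ i $ r = Q $ i' $ r'" using xe[of i] xe[of i'] xc[of i i'] by simp
    qed
  next
    assume H: "\<forall>i r i' r'. Q $ i $ r \<noteq> 0 \<longrightarrow> Q $ i' $ r' \<noteq> 0 \<longrightarrow> Q $ i $ r = Q $ i' $ r'"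
    have xc: "x i - x j = 0" for i j
    proof -
      have "Q $ i $ \<rho> i \<noteq> 0" "Q $ j $ \<rho> j \<noteq> 0" using qnz by auto
      then have "Q $ i $ \<rho> i = Q $ j $ \<rho> j" using H by blast
      then show ?thesis using xe[of i] xe[of j] by simp
    qed
    have rz: "(\<Sum>s\<in>UNIV. M $ r $ s) = 0" for r
      using rows[of r] by (simp add: Lm xc)
    have off: "M $ r $ s \<le> 0" if "r \<noteq> s" for r s
      unfolding Me
    proof (rule sum_nonpos, rule sum_nonpos)
      fix i j
      show "Q $ i $ r * L $ i $ j * Q $ j $ s \<le> 0"
      proof (cases "i = j")
        case True
        then have "Q $ i $ r = 0 \<or> Q $ j $ s = 0" using qnz[of i r] qnz[of j s] that by auto
        then show ?thesis by auto
      next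
        case False
        then have Lij: "L $ i $ j = - w i j" by (simp add: L_def laplacian_def)
        have "Q $ i $ r * Q $ j $ s \<ge> 0"
        proof (cases "Q $ i $ r = 0 \<or> Q $ j $ s = 0")
          case False
          then have "Q $ i $ r = Q $ j $ s" using H by blast
          then show ?thesis by simp
        qed auto
        then have "w i j * (Q $ i $ r * Q $ j $ s) \<ge> 0" using w0 by simp
        then show ?thesis using Lij by (simp add: algebra_simps)
      qed
    qed
    have Msym: "M $ r $ s = M $ s $ r" for r s
      unfolding Me
      by (subst sum.swap) (simp add: Lsym algebra_simps)
    define W where "W r s = (if r = s then 0 else - M $ r $ s)" for r s
    have wgW: "weighted_graph W"
      unfolding weighted_graph_def W_def using off Msym by auto
    have "M = laplacian W"
    proof (intro vec_eq_iff[THEN iffD2] allI)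
      fix r s
      show "M $ r $ s = laplacian W $ r $ s"
      proof (cases "r = s")
        case True
        have "(\<Sum>k\<in>UNIV. W r k) = (\<Sum>k\<in>UNIV-{r}. - M $ r $ k)"
          by (simp add: sum.remove[of UNIV r] W_def)
        also have "\<dots> = M $ r $ r - (\<Sum>k\<in>UNIV. M $ r $ k)"
          by (simp add: sum.remove[of UNIV r] sum_negf)
        finally show ?thesis using True rz by (simp add: laplacian_def)
      next
        case False
        then show ?thesis by (simp add: laplacian_def W_def)
      qed
    qed
    then show "is_comb_laplacian M" unfolding is_comb_laplacian_def using wgW by blast
  qed
  then show ?thesis unfolding pinvQ M_def L_def .
qed

end
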